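(* For every finite graph $G$, the branch-depth of its graphic matroid $M(G)$ is at most the tree-depth $\mathrm{td}(G)$.
   Context: The graphic matroid $M(G)$ has ground set $E(G)$, with a set of edges independent iff it is acyclic. For a rooted tree $T$, $\|T\|$ is its number of edges and its depth is the number of edges of a longest root-to-leaf path. A depth-decomposition of a finite matroid $M$ (rank function $r$) is a pair $(T,f)$ with $T$ a rooted tree and $f:M\to V(T)$ such that (1) $r(M)=\|T\|$ and (2) $r(X)\le\|T^*(X)\|$ for every $X\subseteq M$, where $T^*(X)$ is the union of the paths from the root to all vertices of $f(X)$. The branch-depth $\mathrm{bd}(M)$ is the minimum depth of $T$ over all depth-decompositions $(T,f)$ of $M$. For a rooted tree $T$, $\mathrm{cl}(T)$ is the graph on $V(T)$ with an edge between $u$ and $v$ whenever one is an ancestor of the other. The tree-depth $\mathrm{td}(G)$ is the smallest depth of a rooted tree $T$ with $V(T)=V(G)$ and $G\subseteq\mathrm{cl}(T)$. *)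

theory Defs
  imports Main
begin

text \<open>The edges of the tree are the pairs {v, p v} for v in W, v \<noteq> r.\<close>

definition rooted_tree :: "'v set \<Rightarrow> 'v \<Rightarrow> ('v \<Rightarrow> 'v) \<Rightarrow> bool" where
  "rooted_tree W r p \<longleftrightarrow> finite W \<and> r \<in> W \<and> (\<forall>v\<in>W. v \<noteq> r \<longrightarrow> p v \<in> W)
     \<and> (\<forall>v\<in>W. \<exists>k. (p ^^ k) v = r)"

definition height :: "'v \<Rightarrow> ('v \<Rightarrow> 'v) \<Rightarrow> 'v \<Rightarrow> nat" where
  "height r p v = (LEAST k. (p ^^ k) v = r)"

definition ancestor :: "'v \<Rightarrow> ('v \<Rightarrow> 'v) \<Rightarrow> 'v \<Rightarrow> 'v \<Rightarrow> bool" where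
  "ancestor r p u v \<longleftrightarrow> (\<exists>k \<le> height r p v. (p ^^ k) v = u)"

definition tree_depth_of :: "'v set \<Rightarrow> 'v \<Rightarrow> ('v \<Rightarrow> 'v) \<Rightarrow> nat" where
  "tree_depth_of W r p = Max (height r p ` W)"

definition tree_size :: "'v set \<Rightarrow> nat" where
  "tree_size W = card W - 1"

text \<open>Number of edges of T*(S): the union of the root paths to all vertices of S.
  Its vertex set is the set of ancestors of S; if S is nonempty it is a subtree
  containing r, so its edges correspond to its non-root vertices; if S is empty it has
  no edges.\<close>
definition subtree_edges :: "'v \<Rightarrow> ('v \<Rightarrow> 'v) \<Rightarrow> 'v set \<Rightarrow> nat" where
  "subtree_edges r p S = card ({u. \<exists>v\<in>S. ancestor r p u v} - {r})"

definition depth_decomposition ::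
  "'e set \<Rightarrow> ('e set \<Rightarrow> nat) \<Rightarrow> 'v set \<Rightarrow> 'v \<Rightarrow> ('v \<Rightarrow> 'v) \<Rightarrow> ('e \<Rightarrow> 'v) \<Rightarrow> bool" where
  "depth_decomposition M rk W r p f \<longleftrightarrow>
     rooted_tree W r p \<and> f ` M \<subseteq> W \<and>
     rk M = tree_size W \<and>
     (\<forall>X\<subseteq>M. rk X \<le> subtree_edges r p (f ` X))"

text \<open>Trees are taken with vertices in nat; every finite rooted tree is isomorphic to one.\<close>
definition branch_depth :: "'e set \<Rightarrow> ('e set \<Rightarrow> nat) \<Rightarrow> nat" where
  "branch_depth M rk = (LEAST d. \<exists>(W::nat set) r p f.
       depth_decomposition M rk W r p f \<and> tree_depth_of W r p = d)"

definition finite_graph :: "'a set \<Rightarrow> 'e set \<Rightarrow> ('e \<Rightarrow> 'a set) \<Rightarrow> bool" where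
  "finite_graph V E ends \<longleftrightarrow> finite V \<and> finite E \<and>
     (\<forall>e\<in>E. ends e \<subseteq> V \<and> card (ends e) = 2)"

definition is_cycle :: "('e \<Rightarrow> 'a set) \<Rightarrow> 'a list \<Rightarrow> 'e list \<Rightarrow> bool" where
  "is_cycle ends vs es \<longleftrightarrow> es \<noteq> [] \<and> distinct es \<and> distinct vs \<and>
     length vs = length es \<and>
     (\<forall>i < length es. ends (es ! i) = {vs ! i, vs ! ((i + 1) mod length es)})"

definition acyclic_edges :: "('e \<Rightarrow> 'a set) \<Rightarrow> 'e set \<Rightarrow> bool" where
  "acyclic_edges ends F \<longleftrightarrow> \<not> (\<exists>vs es. is_cycle ends vs es \<and> set es \<subseteq> F)"

definition graphic_rank :: "('e \<Rightarrow> 'a set) \<Rightarrow> 'e set \<Rightarrow> nat" where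
  "graphic_rank ends X = Max (card ` {F. F \<subseteq> X \<and> acyclic_edges ends F})"

text \<open>td(G): least depth of a rooted tree T with V(T) = V(G) and G \<subseteq> cl(T).\<close>
definition treedepth :: "'a set \<Rightarrow> 'e set \<Rightarrow> ('e \<Rightarrow> 'a set) \<Rightarrow> nat" where
  "treedepth V E ends = (LEAST d. \<exists>r p. rooted_tree V r p \<and>
       (\<forall>e\<in>E. \<exists>u v. ends e = {u, v} \<and> (ancestor r p u v \<or> ancestor r p v u)) \<and>
       tree_depth_of V r p = d)"

end

theory Submission
  imports Defs
begin


lemma rt_reach:
  assumes "rooted_tree W r p" "v \<in> W"
  shows "(p ^^ height r p v) v = r"
  using assms unfolding rooted_tree_def height_def by (metis (mono_tags, lifting) LeastI)

lemma rt_before: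
  assumes "k < height r p v" shows "(p ^^ k) v \<noteq> r"
  using assms unfolding height_def using not_less_Least by blast

lemma height_le:
  assumes "(p ^^ k) v = r" shows "height r p v \<le> k"
  using assms unfolding height_def by (rule Least_le)

lemma rt_in:
  assumes "rooted_tree W r p" "v \<in> W" "k \<le> height r p v"
  shows "(p ^^ k) v \<in> W"
  using assms(3)
proof (induction k)
  case 0 then show ?case using assms by simp
next
  case (Suc k)
  have "(p ^^ k) v \<in> W" using Suc by simp
  moreover have "(p ^^ k) v \<noteq> r" using rt_before Suc.prems by (metis Suc_le_eq)
  ultimately show ?case using assms(1) unfolding rooted_tree_def by simp
qed

lemma rt_height_iter:
  assumes "rooted_tree W r p" "v \<in> W" "k \<le> height r p v"
  shows "height r p ((p ^^ k) v) = height r p v - k"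
proof -
  let ?h = "height r p v"
  have a: "(p ^^ (?h - k)) ((p ^^ k) v) = r"
    using rt_reach[OF assms(1,2)] assms(3) by (metis funpow_add comp_apply le_add_diff_inverse2)
  have b: "(p ^^ j) ((p ^^ k) v) \<noteq> r" if "j < ?h - k" for j
  proof -
    have "(p ^^ j) ((p ^^ k) v) = (p ^^ (j + k)) v" by (simp add: funpow_add)
    then show ?thesis using rt_before[of "j+k" r p v] that by simp
  qed
  have c: "(p ^^ height r p ((p ^^ k) v)) ((p ^^ k) v) = r"
    using a unfolding height_def by (rule LeastI)
  show ?thesis using height_le[OF a] b[OF _] c by (meson antisym not_le)
qed

lemma height_root: "height r p r = 0"
  unfolding height_def by simp

lemma height_zero:
  assumes "rooted_tree W r p" "v \<in> W" "height r p v = 0" shows "v = r"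
  using rt_reach[OF assms(1,2)] assms(3) by simp

lemma ancestor_parent:
  assumes "rooted_tree W r p" "v \<in> W" "v \<noteq> r" "ancestor r p u (p v)"
  shows "ancestor r p u v"
proof -
  have h0: "height r p v > 0" using height_zero[OF assms(1,2)] assms(3) by auto
  have pv: "p v = (p ^^ 1) v" by simp
  have hp: "height r p (p v) = height r p v - 1"
    using rt_height_iter[OF assms(1,2), of 1] h0 by simp
  obtain k where k: "k \<le> height r p (p v)" "(p ^^ k) (p v) = u"
    using assms(4) unfolding ancestor_def by blast
  have "(p ^^ Suc k) v = u" using k(2) by (simp add: funpow_Suc_right del: funpow.simps)
  moreover have "Suc k \<le> height r p v" using k(1) hp h0 by simp
  ultimately show ?thesis unfolding ancestor_def by blast
qed

lemma ancestor_refl: "ancestor r p v v"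
  unfolding ancestor_def by (rule exI[of _ 0]) simp

lemma transfer_nat:
  fixes W :: "'b set" and f :: "'e \<Rightarrow> 'b"
  assumes dd: "depth_decomposition M rk W r p f" and pW: "p ` W \<subseteq> W"
  shows "\<exists>(W2::nat set) r2 p2 f2. depth_decomposition M rk W2 r2 p2 f2 \<and>
           tree_depth_of W2 r2 p2 = tree_depth_of W r p"
proof -
  have rt: "rooted_tree W r p" using dd unfolding depth_decomposition_def by blast
  have fin: "finite W" using rt unfolding rooted_tree_def by blast
  obtain h :: "'b \<Rightarrow> nat" and n where inj: "inj_on h W"
    using finite_imp_inj_to_nat_seg[OF fin] by blast
  define p2 where "p2 = (\<lambda>x. h (p (inv_into W h x)))"
  have iterW: "(p ^^ k) v \<in> W" if "v \<in> W" for v k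
    using that pW by (induction k) auto
  have it: "(p2 ^^ k) (h v) = h ((p ^^ k) v)" if "v \<in> W" for v k
  proof (induction k)
    case 0 then show ?case by simp
  next
    case (Suc k) then show ?case
      using iterW[OF that, of k] inj by (simp add: p2_def)
  qed
  have rW: "r \<in> W" using rt unfolding rooted_tree_def by blast
  have eq: "((p2 ^^ k) (h v) = h r) \<longleftrightarrow> ((p ^^ k) v = r)" if "v \<in> W" for v k
    using it[OF that] inj iterW[OF that] rW by (metis inj_on_eq_iff)
  have hgt: "height (h r) p2 (h v) = height r p v" if "v \<in> W" for v
    unfolding height_def using eq[OF that] by simp
  have anc: "ancestor (h r) p2 x (h v) \<longleftrightarrow> (\<exists>u. x = h u \<and> ancestor r p u v)" if "v \<in> W" for x v
    unfolding ancestor_def hgt[OF that] it[OF that] by blast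
  have rt2: "rooted_tree (h ` W) (h r) p2"
    unfolding rooted_tree_def
  proof (intro conjI ballI impI)
    show "finite (h ` W)" using fin by simp
    show "h r \<in> h ` W" using rW by simp
    fix x assume "x \<in> h ` W"
    then obtain v where v: "v \<in> W" "x = h v" by blast
    show "p2 x \<in> h ` W" using v iterW[OF v(1), of 1] it[OF v(1), of 1] by simp
    show "\<exists>k. (p2 ^^ k) x = h r" using v eq rt unfolding rooted_tree_def by blast
  qed
  have ancset: "{u. \<exists>v\<in>h ` S. ancestor (h r) p2 u v} = h ` {u. \<exists>v\<in>S. ancestor r p u v}"
    if "S \<subseteq> W" for S
    using anc that by blast
  have ancW: "{u. \<exists>v\<in>S. ancestor r p u v} \<subseteq> W" if "S \<subseteq> W" for S
  proof
    fix u assume "u \<in> {u. \<exists>v\<in>S. ancestor r p u v}"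
    then obtain v k where "v \<in> S" "(p ^^ k) v = u" unfolding ancestor_def by blast
    then show "u \<in> W" using iterW that by blast
  qed
  have se: "subtree_edges (h r) p2 (h ` S) = subtree_edges r p S" if "S \<subseteq> W" for S
  proof -
    have "h ` {u. \<exists>v\<in>S. ancestor r p u v} - {h r} = h ` ({u. \<exists>v\<in>S. ancestor r p u v} - {r})"
      using inj ancW[OF that] rW by (auto simp: inj_on_eq_iff)
    moreover have "inj_on h ({u. \<exists>v\<in>S. ancestor r p u v} - {r})"
      using inj ancW[OF that] by (meson Diff_subset inj_on_subset)
    ultimately show ?thesis unfolding subtree_edges_def ancset[OF that] by (simp add: card_image)
  qed
  have dd2: "depth_decomposition M rk (h ` W) (h r) p2 (h \<circ> f)"
    unfolding depth_decomposition_def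
  proof (intro conjI allI impI)
    show "rooted_tree (h ` W) (h r) p2" by (rule rt2)
    show "(h \<circ> f) ` M \<subseteq> h ` W" using dd unfolding depth_decomposition_def by auto
    show "rk M = tree_size (h ` W)" using dd inj unfolding depth_decomposition_def tree_size_def
      by (simp add: card_image)
    fix X assume X: "X \<subseteq> M"
    have fX: "f ` X \<subseteq> W" using dd X unfolding depth_decomposition_def by blast
    have "rk X \<le> subtree_edges r p (f ` X)" using dd X unfolding depth_decomposition_def by blast
    then show "rk X \<le> subtree_edges (h r) p2 ((h \<circ> f) ` X)"
      using se[OF fX] by (simp add: image_comp)
  qed
  have "tree_depth_of (h ` W) (h r) p2 = tree_depth_of W r p"
    unfolding tree_depth_of_def image_image using hgt by (metis (no_types, lifting) image_cong)
  then show ?thesis using dd2 by blast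
qed



definition adj :: "('e \<Rightarrow> 'a set) \<Rightarrow> 'e set \<Rightarrow> ('a \<times> 'a) set" where
  "adj ends F = {(x,y). \<exists>e\<in>F. ends e = {x,y}}"

definition conn :: "('e \<Rightarrow> 'a set) \<Rightarrow> 'e set \<Rightarrow> ('a \<times> 'a) set" where
  "conn ends F = (adj ends F)\<^sup>*"

lemma adjI: "e \<in> F \<Longrightarrow> ends e = {x,y} \<Longrightarrow> (x,y) \<in> adj ends F"
  unfolding adj_def by auto

lemma adjE: "(x,y) \<in> adj ends F \<Longrightarrow> (\<And>e. e \<in> F \<Longrightarrow> ends e = {x,y} \<Longrightarrow> P) \<Longrightarrow> P"
  unfolding adj_def by auto

lemma adj_sym: "(x,y) \<in> adj ends F \<Longrightarrow> (y,x) \<in> adj ends F"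
  unfolding adj_def by (auto simp: insert_commute)

lemma conn_sym: "(x,y) \<in> conn ends F \<Longrightarrow> (y,x) \<in> conn ends F"
proof -
  have "sym (adj ends F)" unfolding sym_def using adj_sym by metis
  then have "sym (conn ends F)" unfolding conn_def by (rule sym_rtrancl)
  then show "(x,y) \<in> conn ends F \<Longrightarrow> (y,x) \<in> conn ends F" by (auto dest: symD)
qed

lemma conn_trans: "(x,y) \<in> conn ends F \<Longrightarrow> (y,z) \<in> conn ends F \<Longrightarrow> (x,z) \<in> conn ends F"
  unfolding conn_def by (rule rtrancl_trans)

lemma conn_refl: "(x,x) \<in> conn ends F"
  unfolding conn_def by simp

lemma adj_conn: "(x,y) \<in> adj ends F \<Longrightarrow> (x,y) \<in> conn ends F"
  unfolding conn_def by simp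

lemma adj_mono: "F \<subseteq> G \<Longrightarrow> adj ends F \<subseteq> adj ends G"
  unfolding adj_def by blast

lemma conn_mono: "F \<subseteq> G \<Longrightarrow> conn ends F \<subseteq> conn ends G"
  unfolding conn_def by (simp add: adj_mono rtrancl_mono)

lemma acyclic_subset: "acyclic_edges ends F \<Longrightarrow> G \<subseteq> F \<Longrightarrow> acyclic_edges ends G"
  unfolding acyclic_edges_def by blast

lemma cycle_conn:
  assumes cyc: "is_cycle ends vs es" and sub: "set es \<subseteq> insert e F"
    and i: "i < length es" "es ! i = e"
  shows "(vs ! ((i + 1) mod length es), vs ! i) \<in> conn ends F"
proof -
  let ?n = "length es"
  have npos: "?n > 0" by (metis i(1) gr_zeroI less_nat_zero_code)
  have dist: "distinct es" using cyc unfolding is_cycle_def by blast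
  have en: "\<forall>j < ?n. ends (es ! j) = {vs ! j, vs ! ((j + 1) mod ?n)}"
    using cyc unfolding is_cycle_def by blast
  have step: "\<forall>m. m < ?n \<longrightarrow> (vs ! ((i + 1) mod ?n), vs ! ((i + 1 + m) mod ?n)) \<in> conn ends F"
  proof (intro allI)
    fix m show "m < ?n \<longrightarrow> (vs ! ((i + 1) mod ?n), vs ! ((i + 1 + m) mod ?n)) \<in> conn ends F"
    proof (induction m)
      case 0 then show ?case by (simp add: conn_refl)
    next
      case (Suc m)
      show ?case
      proof
        assume m: "Suc m < ?n"
        let ?j = "(i + 1 + m) mod ?n"
        have jlt: "?j < ?n" using npos by simp
        have jne: "?j \<noteq> i"
        proof
          assume "?j = i"
          show False
          proof (cases "i + 1 + m < ?n")
            case True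
            then show False using \<open>?j = i\<close> by simp
          next
            case False
            then have "(i + 1 + m) mod ?n = (i + 1 + m - ?n) mod ?n" by (simp add: le_mod_geq)
            also have "\<dots> = i + 1 + m - ?n" using i(1) m by simp
            finally show False using \<open>?j = i\<close> m by simp
          qed
        qed
        have "es ! ?j \<noteq> es ! i" using nth_eq_iff_index_eq[OF dist jlt i(1)] jne by simp
        then have "es ! ?j \<noteq> e" using i(2) by simp
        moreover have "es ! ?j \<in> set es" using jlt by simp
        ultimately have inF: "es ! ?j \<in> F" using sub by blast
        have "(?j + 1) mod ?n = (i + 1 + Suc m) mod ?n" by (simp add: mod_Suc_eq)
        moreover have "ends (es ! ?j) = {vs ! ?j, vs ! ((?j + 1) mod ?n)}" using en jlt by blast
        ultimately have "ends (es ! ?j) = {vs ! ?j, vs ! ((i + 1 + Suc m) mod ?n)}" by simp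
        then have "(vs ! ?j, vs ! ((i + 1 + Suc m) mod ?n)) \<in> adj ends F"
          using inF by (intro adjI)
        then have c2: "(vs ! ?j, vs ! ((i + 1 + Suc m) mod ?n)) \<in> conn ends F" by (rule adj_conn)
        have "m < ?n" using m by simp
        then have c1: "(vs ! ((i + 1) mod ?n), vs ! ?j) \<in> conn ends F" using Suc.IH by blast
        show "(vs ! ((i + 1) mod ?n), vs ! ((i + 1 + Suc m) mod ?n)) \<in> conn ends F"
          by (rule conn_trans[OF c1 c2])
      qed
    qed
  qed
  have eqi: "(i + 1 + (?n - 1)) mod ?n = i" using i npos by simp
  have "?n - 1 < ?n" using npos by simp
  then have "(vs ! ((i + 1) mod ?n), vs ! ((i + 1 + (?n - 1)) mod ?n)) \<in> conn ends F"
    using step by blast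
  then show ?thesis unfolding eqi .
qed

definition is_path :: "('e \<Rightarrow> 'a set) \<Rightarrow> 'e set \<Rightarrow> 'a list \<Rightarrow> 'e list \<Rightarrow> bool" where
  "is_path ends F vs es \<longleftrightarrow> distinct vs \<and> length vs = Suc (length es) \<and> set es \<subseteq> F \<and>
     (\<forall>i < length es. ends (es ! i) = {vs ! i, vs ! Suc i})"

lemma conn_path:
  assumes "(x,y) \<in> conn ends F"
  shows "\<exists>vs es. is_path ends F vs es \<and> hd vs = x \<and> last vs = y"
  using assms unfolding conn_def
proof (induction rule: rtrancl_induct)
  case base
  show ?case by (rule exI[of _ "[x]"], rule exI[of _ "[]"]) (simp add: is_path_def)
next
  case (step y z)
  then obtain vs es where P: "is_path ends F vs es" "hd vs = x" "last vs = y" by blast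
  obtain e where e: "e \<in> F" "ends e = {y,z}" using step.hyps(2) adjE by metis
  have lv: "length vs = Suc (length es)" using P unfolding is_path_def by blast
  have vsne: "vs \<noteq> []" using lv by auto
  show ?case
  proof (cases "z \<in> set vs")
    case True
    then obtain i where i: "i < length vs" "vs ! i = z" by (metis in_set_conv_nth)
    have "is_path ends F (take (Suc i) vs) (take i es)"
      using P(1) i lv unfolding is_path_def by (auto dest: in_set_takeD)
    moreover have "hd (take (Suc i) vs) = x" using P vsne by simp
    moreover have "last (take (Suc i) vs) = z" using i by (simp add: take_Suc_conv_app_nth)
    ultimately show ?thesis by blast
  next
    case False
    have ly: "vs ! length es = y" using P(3) lv vsne by (simp add: last_conv_nth)
    have "is_path ends F (vs @ [z]) (es @ [e])"
      unfolding is_path_def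
    proof (intro conjI allI impI)
      show "distinct (vs @ [z])" using P(1) False unfolding is_path_def by simp
      show "length (vs @ [z]) = Suc (length (es @ [e]))" using lv by simp
      show "set (es @ [e]) \<subseteq> F" using P(1) e unfolding is_path_def by simp
      fix i assume "i < length (es @ [e])"
      then have "i < length es \<or> i = length es" by auto
      then show "ends ((es @ [e]) ! i) = {(vs @ [z]) ! i, (vs @ [z]) ! Suc i}"
      proof
        assume "i < length es"
        then show ?thesis using P(1) lv unfolding is_path_def by (simp add: nth_append)
      next
        assume "i = length es"
        then show ?thesis using e ly lv by (simp add: nth_append)
      qed
    qed
    moreover have "hd (vs @ [z]) = x" using P vsne by simp
    ultimately show ?thesis by (metis last_snoc)
  qed
qed

lemma path_distinct_edges:
  assumes "is_path ends F vs es" shows "distinct es"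
proof -
  have d: "distinct vs" and l: "length vs = Suc (length es)"
    and en: "\<forall>i < length es. ends (es ! i) = {vs ! i, vs ! Suc i}"
    using assms unfolding is_path_def by blast+
  show ?thesis unfolding distinct_conv_nth
  proof (intro allI impI)
    fix i j assume ij: "i < length es" "j < length es" "i \<noteq> j"
    show "es ! i \<noteq> es ! j"
    proof
      assume "es ! i = es ! j"
      then have "{vs ! i, vs ! Suc i} = {vs ! j, vs ! Suc j}" using en ij by metis
      then have "vs ! i = vs ! j \<or> vs ! i = vs ! Suc j" by blast
      moreover have "vs ! Suc i = vs ! j \<or> vs ! Suc i = vs ! Suc j"
        using \<open>{vs ! i, vs ! Suc i} = {vs ! j, vs ! Suc j}\<close> by blast
      ultimately show False using d ij l by (auto simp: nth_eq_iff_index_eq)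
    qed
  qed
qed

lemma acyclic_not_conn:
  assumes ac: "acyclic_edges ends F" and e: "e \<in> F" "ends e = {u,v}" "u \<noteq> v"
  shows "(u,v) \<notin> conn ends (F - {e})"
proof
  assume "(u,v) \<in> conn ends (F - {e})"
  then obtain vs es where P: "is_path ends (F - {e}) vs es" "hd vs = u" "last vs = v"
    using conn_path[of u v ends "F - {e}"] by metis
  have lv: "length vs = Suc (length es)" and dv: "distinct vs" and sub: "set es \<subseteq> F - {e}"
    and en: "\<forall>i < length es. ends (es ! i) = {vs ! i, vs ! Suc i}"
    using P(1) unfolding is_path_def by blast+
  have de: "distinct es" using path_distinct_edges[OF P(1)] .
  have vsne: "vs \<noteq> []" using lv by auto
  have h0: "vs ! 0 = u" using P(2) vsne by (simp add: hd_conv_nth)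
  have hl: "vs ! length es = v" using P(3) lv vsne by (simp add: last_conv_nth)
  have "is_cycle ends vs (es @ [e])"
    unfolding is_cycle_def
  proof (intro conjI allI impI)
    show "es @ [e] \<noteq> []" by simp
    show "distinct (es @ [e])" using de sub by auto
    show "distinct vs" by (rule dv)
    show "length vs = length (es @ [e])" using lv by simp
    fix i assume i: "i < length (es @ [e])"
    show "ends ((es @ [e]) ! i) = {vs ! i, vs ! ((i + 1) mod length (es @ [e]))}"
    proof (cases "i < length es")
      case True
      then show ?thesis using en by (simp add: nth_append)
    next
      case False
      then have "i = length es" using i by simp
      then show ?thesis using e h0 hl by (simp add: nth_append insert_commute)
    qed
  qed
  moreover have "set (es @ [e]) \<subseteq> F" using sub e by auto
  ultimately show False using ac unfolding acyclic_edges_def by blast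
qed


lemma forest_bound_nat:
  fixes g :: "'a \<Rightarrow> nat"
  assumes "finite F" "acyclic_edges ends F" "finite A"
    "\<forall>e\<in>F. \<exists>u v. u \<noteq> v \<and> ends e = {u,v} \<and> u \<in> A \<and> v \<in> A"
    "\<forall>(x,y)\<in>adj ends F. g x = g y"
  shows "card F + card (g ` A) \<le> card A"
  using assms
proof (induction F arbitrary: g rule: finite_induct)
  case empty
  then show ?case by (simp add: card_image_le)
next
  case (insert e F)
  obtain u v where uv: "u \<noteq> v" "ends e = {u,v}" "u \<in> A" "v \<in> A" using insert.prems by blast
  have acF: "acyclic_edges ends F" using insert.prems acyclic_subset by blast
  define g' where "g' = (\<lambda>x. 2 * g x + (if (u,x) \<in> conn ends F then 1 else 0::nat))"
  have g'c: "\<forall>(x,y)\<in>adj ends F. g' x = g' y"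
  proof (clarify)
    fix x y assume xy: "(x,y) \<in> adj ends F"
    have "(x,y) \<in> adj ends (insert e F)" using xy adj_mono[of F "insert e F"] by blast
    then have "g x = g y" using insert.prems by blast
    moreover have c1: "(x,y) \<in> conn ends F" "(y,x) \<in> conn ends F" using adj_conn[OF xy] adj_conn[OF adj_sym[OF xy]] by auto
    moreover have "(u,x) \<in> conn ends F \<longleftrightarrow> (u,y) \<in> conn ends F"
      using conn_trans[OF _ c1(1), of u] conn_trans[OF _ c1(2), of u] by blast
    ultimately show "g' x = g' y" unfolding g'_def by simp
  qed
  have IH: "card F + card (g' ` A) \<le> card A"
    using insert.IH[OF acF insert.prems(2), of g'] insert.prems(3) g'c by auto
  have nc: "(u,v) \<notin> conn ends F"
    using acyclic_not_conn[OF insert.prems(1), of e u v] uv insert.hyps(2) by simp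
  have "(u,v) \<in> adj ends (insert e F)" using uv(2) by (intro adjI[of e]) auto
  then have guv: "g u = g v"
    using insert.prems(4) by blast
  let ?S = "g' ` A"
  let ?T = "2 * g u + 1"
  have t: "?T \<in> ?S" using uv unfolding g'_def by (auto simp: conn_refl intro!: image_eqI[of _ _ u])
  have f: "2 * g u \<in> ?S" using uv nc guv unfolding g'_def by (auto intro!: image_eqI[of _ _ v])
  have dv: "\<And>x. g' x div 2 = g x" unfolding g'_def by simp
  have "g ` A \<subseteq> (\<lambda>n. n div 2) ` (?S - {?T})"
  proof
    fix a assume "a \<in> g ` A"
    then obtain x where x: "x \<in> A" "a = g x" by blast
    show "a \<in> (\<lambda>n. n div 2) ` (?S - {?T})"
    proof (cases "g' x = ?T")
      case True
      then have "g x = (2 * g u + 1) div 2" using dv[of x] by simp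
      then have "g x = g u" by simp
      then show ?thesis using f x by (intro image_eqI[of _ _ "2 * g u"]) auto
    next
      case False
      then show ?thesis using x dv by (intro image_eqI[of _ _ "g' x"]) auto
    qed
  qed
  then have "card (g ` A) \<le> card (?S - {?T})"
    using insert.prems(2) by (intro order_trans[OF card_mono card_image_le]) auto
  also have "\<dots> = card ?S - 1" using t by simp
  finally have c1: "card (g ` A) \<le> card ?S - 1" .
  have "card ?S > 0" using t insert.prems(2) by (auto simp: card_gt_0_iff)
  then have "card (g ` A) + 1 \<le> card ?S" using c1 by linarith
  then show ?case using IH insert.hyps by simp
qed

lemma forest_bound:
  assumes "finite F" "acyclic_edges ends F" "finite A"
    "\<forall>e\<in>F. \<exists>u v. u \<noteq> v \<and> ends e = {u,v} \<and> u \<in> A \<and> v \<in> A"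
    "\<forall>(x,y)\<in>adj ends F. g x = g y"
  shows "card F + card (g ` A) \<le> card A"
proof -
  obtain h :: "_ \<Rightarrow> nat" and n where h: "inj_on h (g ` A)"
    using finite_imp_inj_to_nat_seg[of "g ` A"] assms(3) by blast
  have "card F + card ((h \<circ> g) ` A) \<le> card A"
    by (rule forest_bound_nat[OF assms(1-4)]) (use assms(5) in auto)
  moreover have "card ((h \<circ> g) ` A) = card (g ` A)"
    using h by (metis card_image image_comp)
  ultimately show ?thesis by simp
qed


lemma conn_insert_cases:
  assumes "(x,y) \<in> conn ends (insert e F)" "ends e = {u,v}"
  shows "(x,y) \<in> conn ends F \<or> ((x,u) \<in> conn ends F \<and> (v,y) \<in> conn ends F)
         \<or> ((x,v) \<in> conn ends F \<and> (u,y) \<in> conn ends F)"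
  using assms(1) unfolding conn_def[of ends "insert e F"]
proof (induction rule: rtrancl_induct)
  case base then show ?case by (simp add: conn_refl)
next
  case (step y z)
  obtain e' where e': "e' \<in> insert e F" "ends e' = {y,z}" using step.hyps(2) adjE by metis
  show ?case
  proof (cases "e' \<in> F")
    case True
    then have yz: "(y,z) \<in> conn ends F" using e' by (intro adj_conn adjI)
    show ?thesis using step.IH
    proof (elim disjE conjE)
      assume "(x,y) \<in> conn ends F" then show ?thesis using conn_trans[OF _ yz] by blast
    next
      assume "(x,u) \<in> conn ends F" "(v,y) \<in> conn ends F" then show ?thesis using conn_trans[OF _ yz] by blast
    next
      assume "(x,v) \<in> conn ends F" "(u,y) \<in> conn ends F" then show ?thesis using conn_trans[OF _ yz] by blast
    qed
  next
    case False
    then have "{y,z} = {u,v}" using e' assms(2) by auto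
    then have yz: "(y = u \<and> z = v) \<or> (y = v \<and> z = u)" by (auto simp: doubleton_eq_iff)
    show ?thesis using step.IH
    proof (elim disjE conjE)
      assume a: "(x,y) \<in> conn ends F"
      show ?thesis using yz
      proof
        assume "y = u \<and> z = v" then show ?thesis using a conn_refl[of v ends F] by auto
      next
        assume "y = v \<and> z = u" then show ?thesis using a conn_refl[of u ends F] by auto
      qed
    next
      assume a: "(x,u) \<in> conn ends F" "(v,y) \<in> conn ends F"
      show ?thesis using yz
      proof
        assume yu: "y = u \<and> z = v"
        have "(v,u) \<in> conn ends F" using a(2) yu by simp
        then have "(x,v) \<in> conn ends F" using conn_trans[OF a(1) conn_sym] by blast
        then show ?thesis using yu by simp
      next
        assume yv: "y = v \<and> z = u"
        then show ?thesis using a(1) by simp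
      qed
    next
      assume a: "(x,v) \<in> conn ends F" "(u,y) \<in> conn ends F"
      show ?thesis using yz
      proof
        assume yu: "y = u \<and> z = v"
        then show ?thesis using a by simp
      next
        assume yv: "y = v \<and> z = u"
        have uv': "(u,v) \<in> conn ends F" using a(2) yv by simp
        show ?thesis using conn_trans[OF a(1) conn_sym[OF uv']] yv by simp
      qed
    qed
  qed
qed

lemma class_eq: "conn ends F `` {x} = conn ends F `` {y} \<longleftrightarrow> (x,y) \<in> conn ends F"
proof
  assume "conn ends F `` {x} = conn ends F `` {y}"
  then have "y \<in> conn ends F `` {x}" using conn_refl by fastforce
  then show "(x,y) \<in> conn ends F" by simp
next
  assume xy: "(x,y) \<in> conn ends F"
  show "conn ends F `` {x} = conn ends F `` {y}"
  proof (rule set_eqI, rule iffI)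
    fix z assume "z \<in> conn ends F `` {x}"
    then have "(x,z) \<in> conn ends F" by simp
    then have "(y,z) \<in> conn ends F" using conn_trans[OF conn_sym[OF xy]] by blast
    then show "z \<in> conn ends F `` {y}" by simp
  next
    fix z assume "z \<in> conn ends F `` {y}"
    then have "(y,z) \<in> conn ends F" by simp
    then have "(x,z) \<in> conn ends F" using conn_trans[OF xy] by blast
    then show "z \<in> conn ends F `` {x}" by simp
  qed
qed

lemma card_factor:
  assumes "finite B" "\<forall>x\<in>B. \<forall>y\<in>B. c x = c y \<longrightarrow> c' x = c' y"
  shows "card (c' ` B) \<le> card (c ` B)"
proof -
  define k where "k = (\<lambda>S. c' (SOME x. x \<in> B \<and> c x = S))"
  have "c' ` B = k ` (c ` B)"
  proof (rule set_eqI, rule iffI)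
    fix a assume "a \<in> c' ` B"
    then obtain x where x: "x \<in> B" "a = c' x" by blast
    have "(SOME y. y \<in> B \<and> c y = c x) \<in> B \<and> c (SOME y. y \<in> B \<and> c y = c x) = c x"
      by (rule someI[of _ x]) (use x in simp)
    then have "k (c x) = a" unfolding k_def using assms(2) x by metis
    then show "a \<in> k ` (c ` B)" using x by blast
  next
    fix a assume "a \<in> k ` (c ` B)"
    then obtain x where x: "x \<in> B" "a = k (c x)" by blast
    have "(SOME y. y \<in> B \<and> c y = c x) \<in> B \<and> c (SOME y. y \<in> B \<and> c y = c x) = c x"
      by (rule someI[of _ x]) (use x in simp)
    then show "a \<in> c' ` B" unfolding k_def x(2) by blast
  qed
  then show ?thesis using assms(1) by (simp add: card_image_le)
qed

lemma vertex_bound: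
  assumes "finite F" "finite A" "\<forall>e\<in>F. \<exists>u v. ends e = {u,v} \<and> u \<in> A \<and> v \<in> A"
  shows "card A \<le> card F + card ((\<lambda>x. conn ends F `` {x}) ` A)"
  using assms
proof (induction F rule: finite_induct)
  case empty
  have "inj_on (\<lambda>x. conn ends {} `` {x}) A"
    by (auto intro!: inj_onI simp: class_eq conn_def adj_def)
  then show ?case by (simp add: card_image)
next
  case (insert e F)
  obtain u v where uv: "ends e = {u,v}" "u \<in> A" "v \<in> A" using insert.prems by blast
  let ?c' = "\<lambda>x. conn ends F `` {x}" and ?c = "\<lambda>x. conn ends (insert e F) `` {x}"
  have IH: "card A \<le> card F + card (?c' ` A)" using insert by auto
  define B where "B = {x \<in> A. (x,v) \<notin> conn ends F}"
  have finB: "finite B" using insert.prems(1) unfolding B_def by simp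
  have fac: "\<forall>x\<in>B. \<forall>y\<in>B. ?c x = ?c y \<longrightarrow> ?c' x = ?c' y"
  proof (intro ballI impI)
    fix x y assume xy: "x \<in> B" "y \<in> B" "?c x = ?c y"
    then have "(x,y) \<in> conn ends (insert e F)" using class_eq by metis
    then have cs: "(x,y) \<in> conn ends F \<or> ((x,u) \<in> conn ends F \<and> (v,y) \<in> conn ends F)
         \<or> ((x,v) \<in> conn ends F \<and> (u,y) \<in> conn ends F)" using conn_insert_cases[of x y ends e F u v] uv(1) by blast
    have nx: "(x,v) \<notin> conn ends F" using xy(1) unfolding B_def by blast
    have ny: "(v,y) \<notin> conn ends F"
    proof
      assume "(v,y) \<in> conn ends F"
      then have "(y,v) \<in> conn ends F" by (rule conn_sym)
      then show False using xy(2) unfolding B_def by blast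
    qed
    then have "(x,y) \<in> conn ends F" using cs nx by blast
    then show "?c' x = ?c' y" using class_eq by metis
  qed
  have "?c' ` A \<subseteq> insert (?c' v) (?c' ` B)"
  proof
    fix a assume "a \<in> ?c' ` A"
    then obtain x where x: "x \<in> A" "a = ?c' x" by blast
    show "a \<in> insert (?c' v) (?c' ` B)"
    proof (cases "(x,v) \<in> conn ends F")
      case True
      then have "?c' x = ?c' v" by (simp only: class_eq)
      then show ?thesis using x by simp
    next
      case False then have "x \<in> B" using x unfolding B_def by blast
      then show ?thesis using x by blast
    qed
  qed
  have fA: "finite A" by (rule insert.prems(1))
  have k1: "card (?c' ` A) \<le> card (insert (?c' v) (?c' ` B))"
    using finB \<open>?c' ` A \<subseteq> insert (?c' v) (?c' ` B)\<close> by (intro card_mono) simp_all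
  have k2: "card (insert (?c' v) (?c' ` B)) \<le> Suc (card (?c' ` B))"
    using finB by (simp add: card_insert_if)
  have k3: "card (?c' ` B) \<le> card (?c ` B)" by (rule card_factor[OF finB fac])
  have k4: "card (?c ` B) \<le> card (?c ` A)" using fA unfolding B_def
    by (intro card_mono) auto
  have "card (?c' ` A) \<le> Suc (card (?c ` A))" using k1 k2 k3 k4 by linarith
  then show ?case using IH insert.hyps by simp
qed



locale etree =
  fixes V :: "'a set" and E :: "'e set" and ends :: "'e \<Rightarrow> 'a set"
    and r :: 'a and p :: "'a \<Rightarrow> 'a" and F :: "'e set"
  assumes fg: "finite_graph V E ends"
    and rt: "rooted_tree V r p"
    and cl: "\<forall>e\<in>E. \<exists>u v. ends e = {u,v} \<and> (ancestor r p u v \<or> ancestor r p v u)"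
    and FE: "F \<subseteq> E"
    and Fac: "acyclic_edges ends F"
    and Fmax: "\<forall>e\<in>E. \<forall>u v. ends e = {u,v} \<longrightarrow> (u,v) \<in> conn ends F"
    and Frank: "card F = graphic_rank ends E"
begin

abbreviation "R \<equiv> conn ends F"
abbreviation "h \<equiv> height r p"

definition topk :: "'a \<Rightarrow> nat" where
  "topk x = (GREATEST k. k \<le> h x \<and> ((p ^^ k) x, x) \<in> R)"

definition top :: "'a \<Rightarrow> 'a" where
  "top x = (p ^^ topk x) x"

lemma finV: "finite V" using rt unfolding rooted_tree_def by blast
lemma rV: "r \<in> V" using rt unfolding rooted_tree_def by blast
lemma finE: "finite E" using fg unfolding finite_graph_def by blast
lemma endsV: "e \<in> E \<Longrightarrow> ends e \<subseteq> V" using fg unfolding finite_graph_def by blast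
lemma ends2: "e \<in> E \<Longrightarrow> card (ends e) = 2" using fg unfolding finite_graph_def by blast

lemma topk_props: "topk x \<le> h x \<and> ((p ^^ topk x) x, x) \<in> R"
proof -
  have "(\<lambda>k. k \<le> h x \<and> ((p ^^ k) x, x) \<in> R) (Greatest (\<lambda>k. k \<le> h x \<and> ((p ^^ k) x, x) \<in> R))"
    by (rule GreatestI_nat[of _ 0 "h x"]) (auto simp: conn_refl)
  then show ?thesis unfolding topk_def by simp
qed

lemma topk_le: "topk x \<le> h x" using topk_props by blast
lemma top_R: "(top x, x) \<in> R" using topk_props unfolding top_def by blast

lemma topk_max: "j \<le> h x \<Longrightarrow> ((p ^^ j) x, x) \<in> R \<Longrightarrow> j \<le> topk x"
  unfolding topk_def by (rule Greatest_le_nat[of _ j "h x"]) auto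

lemma iter_add: "(p ^^ i) ((p ^^ j) x) = (p ^^ (i + j)) x"
  by (simp add: funpow_add)

lemma top_in: "x \<in> V \<Longrightarrow> top x \<in> V"
  unfolding top_def using rt_in[OF rt] topk_le by blast

lemma topk_shift:
  assumes x: "x \<in> V" and j: "j \<le> h x" "((p ^^ j) x, x) \<in> R"
  shows "topk ((p ^^ j) x) = topk x - j" and "j \<le> topk x"
proof -
  let ?y = "(p ^^ j) x"
  have hy: "h ?y = h x - j" using rt_height_iter[OF rt x j(1)] .
  show jt: "j \<le> topk x" using topk_max[OF j] .
  have a: "topk ?y + j \<le> topk x"
  proof (rule topk_max)
    show "topk ?y + j \<le> h x" using topk_le[of ?y] hy j by simp
    have "((p ^^ topk ?y) ?y, ?y) \<in> R" using topk_props by blast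
    then have "((p ^^ (topk ?y + j)) x, ?y) \<in> R" by (simp add: iter_add)
    then show "((p ^^ (topk ?y + j)) x, x) \<in> R" using conn_trans[OF _ j(2)] by blast
  qed
  have b: "topk x - j \<le> topk ?y"
  proof (rule topk_max)
    show "topk x - j \<le> h ?y" using hy topk_le[of x] by simp
    have "(p ^^ (topk x - j)) ?y = (p ^^ topk x) x" using jt by (simp add: iter_add)
    then have "((p ^^ (topk x - j)) ?y, x) \<in> R" using topk_props by simp
    then show "((p ^^ (topk x - j)) ?y, ?y) \<in> R" using conn_trans[OF _ conn_sym[OF j(2)]] by blast
  qed
  show "topk ?y = topk x - j" using a b by simp
qed

lemma top_shift:
  assumes x: "x \<in> V" and j: "j \<le> h x" "((p ^^ j) x, x) \<in> R"
  shows "top ((p ^^ j) x) = top x"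
proof -
  have "top ((p ^^ j) x) = (p ^^ (topk x - j)) ((p ^^ j) x)" unfolding top_def using topk_shift[OF x j] by simp
  also have "\<dots> = (p ^^ topk x) x" using topk_shift(2)[OF x j] by (simp add: iter_add)
  finally show ?thesis unfolding top_def .
qed

lemma topk_top: "x \<in> V \<Longrightarrow> topk (top x) = 0"
  unfolding top_def using topk_shift[of x "topk x"] topk_props by simp

lemma anc_iter: "ancestor r p u v \<Longrightarrow> \<exists>j \<le> h v. u = (p ^^ j) v"
  unfolding ancestor_def by auto

lemma edge_top:
  assumes e: "e \<in> E" "ends e = {u,v}" and a: "ancestor r p u v"
  shows "top u = top v" and "(u,v) \<in> R"
proof -
  show uv: "(u,v) \<in> R" using Fmax e by blast
  obtain j where j: "j \<le> h v" "u = (p ^^ j) v" using anc_iter[OF a] by blast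
  have vV: "v \<in> V" using endsV[OF e(1)] e(2) by blast
  show "top u = top v" using top_shift[OF vV j(1)] uv j(2) by simp
qed

lemma adj_top:
  assumes "(x,y) \<in> adj ends E" shows "top x = top y"
proof -
  obtain e where e: "e \<in> E" "ends e = {x,y}" using assms adjE by metis
  obtain u v where uv: "ends e = {u,v}" "ancestor r p u v \<or> ancestor r p v u" using cl e(1) by blast
  have "top u = top v" using uv edge_top[OF e(1) uv(1)] edge_top[OF e(1), of v u] uv(1)
    by (metis insert_commute)
  moreover have "{x,y} = {u,v}" using e uv by simp
  ultimately show ?thesis by (metis doubleton_eq_iff)
qed

lemma R_top:
  assumes "(x,y) \<in> R" shows "top x = top y"
  using assms unfolding conn_def
proof (induction rule: rtrancl_induct)
  case base then show ?case by simp
next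
  case (step y z)
  have "(y,z) \<in> adj ends E" using step.hyps(2) adj_mono[OF FE] by blast
  then show ?case using step.IH adj_top by simp
qed

end



context etree begin

definition Wn :: "'a set" where "Wn = {x \<in> V. topk x > 0}"
definition Tops :: "'a set" where "Tops = {x \<in> V. topk x = 0}"
definition W' :: "'a set" where "W' = insert r Wn"

definition nk :: "'a \<Rightarrow> nat" where
  "nk x = (LEAST k. 0 < k \<and> k \<le> h x \<and> ((p ^^ k) x, x) \<in> R)"

definition cpar :: "'a \<Rightarrow> 'a" where "cpar x = (p ^^ nk x) x"

definition p' :: "'a \<Rightarrow> 'a" where
  "p' x = (if x \<in> Wn then (if topk (cpar x) = 0 then r else cpar x) else r)"

lemma hr: "h r = 0" by (rule height_root)

lemma topk_r: "topk r = 0" using topk_le[of r] hr by simp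

lemma r_notin: "r \<notin> Wn" unfolding Wn_def using topk_r by simp

lemma Wn_h: "x \<in> Wn \<Longrightarrow> h x > 0" unfolding Wn_def using topk_le[of x] by simp

lemma Wn_ne: "x \<in> Wn \<Longrightarrow> x \<noteq> r" using r_notin by blast

lemma nk_props:
  assumes "x \<in> Wn"
  shows "0 < nk x" "nk x \<le> h x" "(cpar x, x) \<in> R" "nk x \<le> topk x"
    "\<And>j. 0 < j \<Longrightarrow> j \<le> h x \<Longrightarrow> ((p ^^ j) x, x) \<in> R \<Longrightarrow> nk x \<le> j"
proof -
  let ?P = "\<lambda>k. 0 < k \<and> k \<le> h x \<and> ((p ^^ k) x, x) \<in> R"
  have Pt: "?P (topk x)" using assms topk_props unfolding Wn_def by simp
  have "?P (nk x)" unfolding nk_def by (rule LeastI[of ?P, OF Pt])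
  then show "0 < nk x" "nk x \<le> h x" "(cpar x, x) \<in> R" unfolding cpar_def by auto
  show "nk x \<le> topk x" unfolding nk_def by (rule Least_le[of ?P, OF Pt])
  show "\<And>j. 0 < j \<Longrightarrow> j \<le> h x \<Longrightarrow> ((p ^^ j) x, x) \<in> R \<Longrightarrow> nk x \<le> j"
    unfolding nk_def by (rule Least_le) simp
qed

lemma WnV: "x \<in> Wn \<Longrightarrow> x \<in> V" unfolding Wn_def by simp

lemma cpar_in: "x \<in> Wn \<Longrightarrow> cpar x \<in> V"
  unfolding cpar_def using rt_in[OF rt WnV nk_props(2)] by blast

lemma cpar_h: "x \<in> Wn \<Longrightarrow> h (cpar x) < h x"
  unfolding cpar_def using rt_height_iter[OF rt WnV nk_props(2)] nk_props(1)[of x] nk_props(2)[of x] Wn_h[of x]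
  by simp

lemma W'_sub: "W' \<subseteq> V" unfolding W'_def Wn_def using rV by blast

lemma p'_in: "x \<in> W' \<Longrightarrow> p' x \<in> W'"
  unfolding p'_def W'_def using cpar_in unfolding Wn_def by auto

lemma p'_h: "x \<in> Wn \<Longrightarrow> h (p' x) < h x"
  unfolding p'_def using cpar_h Wn_h hr by auto

lemma p'_reach: "x \<in> W' \<Longrightarrow> \<exists>k \<le> h x. (p' ^^ k) x = r"
proof (induction "h x" arbitrary: x rule: less_induct)
  case less
  show ?case
  proof (cases "x = r")
    case True then show ?thesis by (intro exI[of _ 0]) simp
  next
    case False
    then have xW: "x \<in> Wn" using less.prems unfolding W'_def by blast
    have "p' x \<in> W'" using p'_in less.prems by blast
    then obtain k where k: "k \<le> h (p' x)" "(p' ^^ k) (p' x) = r"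
      using less.hyps[OF p'_h[OF xW]] by blast
    have "(p' ^^ Suc k) x = r" using k(2) by (simp add: funpow_Suc_right del: funpow.simps)
    moreover have "Suc k \<le> h x" using k(1) p'_h[OF xW] by simp
    ultimately show ?thesis by blast
  qed
qed

lemma rt': "rooted_tree W' r p'"
  unfolding rooted_tree_def
proof (intro conjI ballI impI)
  show "finite W'" using finite_subset[OF W'_sub finV] .
  show "r \<in> W'" unfolding W'_def by simp
  show "\<And>v. v \<in> W' \<Longrightarrow> v \<noteq> r \<Longrightarrow> p' v \<in> W'" using p'_in by blast
  show "\<And>v. v \<in> W' \<Longrightarrow> \<exists>k. (p' ^^ k) v = r" using p'_reach by blast
qed

lemma height'_le: "x \<in> W' \<Longrightarrow> height r p' x \<le> h x"
  using p'_reach height_le by (metis order_trans)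

lemma depth_le: "tree_depth_of W' r p' \<le> tree_depth_of V r p"
  unfolding tree_depth_of_def
proof -
  have fW': "finite W'" using finite_subset[OF W'_sub finV] .
  have ne: "W' \<noteq> {}" unfolding W'_def by simp
  show "Max (height r p' ` W') \<le> Max (h ` V)"
  proof (subst Max_le_iff)
    show "finite (height r p' ` W')" using fW' by simp
    show "height r p' ` W' \<noteq> {}" using ne by simp
    show "\<forall>a\<in>height r p' ` W'. a \<le> Max (h ` V)"
    proof
      fix a assume "a \<in> height r p' ` W'"
      then obtain x where x: "x \<in> W'" "a = height r p' x" by blast
      have "h x \<le> Max (h ` V)" using x(1) W'_sub finV by (intro Max_ge) auto
      then show "a \<le> Max (h ` V)" using height'_le[OF x(1)] x(2) by simp
    qed
  qed
qed

lemma anc'_lemma: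
  "x \<in> Wn \<Longrightarrow> j \<le> h x \<Longrightarrow> ((p ^^ j) x, x) \<in> R \<Longrightarrow> 0 < topk ((p ^^ j) x)
    \<Longrightarrow> ancestor r p' ((p ^^ j) x) x"
proof (induction "h x" arbitrary: x j rule: less_induct)
  case less
  note xW = less.prems(1)
  have xV: "x \<in> V" using WnV[OF xW] .
  show ?case
  proof (cases "j = 0")
    case True then show ?thesis by (simp add: ancestor_refl)
  next
    case False
    have nkj: "nk x \<le> j" using nk_props(5)[OF xW, of j] False less.prems by simp
    have cR: "(cpar x, x) \<in> R" using nk_props(3)[OF xW] .
    have tc: "topk (cpar x) = topk x - nk x"
      unfolding cpar_def using topk_shift(1)[OF xV nk_props(2)[OF xW]] cR unfolding cpar_def by simp
    have jt: "j \<le> topk x" using topk_shift(2)[OF xV less.prems(2,3)] .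
    show ?thesis
    proof (cases "nk x = j")
      case True
      then have "cpar x = (p ^^ j) x" unfolding cpar_def by simp
      then have "p' x = (p ^^ j) x" unfolding p'_def using xW less.prems(4) by simp
      then show ?thesis using ancestor_parent[OF rt' _ Wn_ne[OF xW], of "(p ^^ j) x"] xW
          ancestor_refl[of r p' "(p ^^ j) x"] unfolding W'_def by simp
    next
      case False
      then have lt: "nk x < j" using nkj by simp
      let ?y = "cpar x"
      have yV: "?y \<in> V" using cpar_in[OF xW] .
      have tpos: "topk ?y > 0" using tc lt jt by simp
      then have yW: "?y \<in> Wn" using yV unfolding Wn_def by simp
      have px: "p' x = ?y" unfolding p'_def using xW tpos by simp
      have eqj: "(p ^^ (j - nk x)) ?y = (p ^^ j) x" unfolding cpar_def using lt by (simp add: iter_add)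
      have hy: "h ?y = h x - nk x"
        unfolding cpar_def using rt_height_iter[OF rt xV nk_props(2)[OF xW]] .
      have j1: "j - nk x \<le> h ?y" using hy less.prems(2) by simp
      have j2: "((p ^^ (j - nk x)) ?y, ?y) \<in> R"
        using eqj conn_trans[OF less.prems(3) conn_sym[OF cR]] by simp
      have "ancestor r p' ((p ^^ (j - nk x)) ?y) ?y"
        using less.hyps[OF cpar_h[OF xW] yW j1 j2] eqj less.prems(4) by simp
      then have "ancestor r p' ((p ^^ j) x) (p' x)" using eqj px by simp
      then show ?thesis using ancestor_parent[OF rt' _ Wn_ne[OF xW]] xW unfolding W'_def by blast
    qed
  qed
qed

end



context etree begin

definition fe :: "'e \<Rightarrow> 'a" where
  "fe e = (SOME v. \<exists>u. u \<noteq> v \<and> ends e = {u,v} \<and> ancestor r p u v)"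

lemma fe_props:
  assumes e: "e \<in> E"
  shows "\<exists>u. u \<noteq> fe e \<and> ends e = {u, fe e} \<and> ancestor r p u (fe e)"
proof -
  obtain u v where uv: "ends e = {u,v}" "ancestor r p u v \<or> ancestor r p v u" using bspec[OF cl e] by auto
  have "u \<noteq> v"
  proof
    assume "u = v"
    then have "card (ends e) = 1" using uv(1) by simp
    then show False using ends2[OF e] by simp
  qed
  have "\<exists>v. \<exists>u. u \<noteq> v \<and> ends e = {u,v} \<and> ancestor r p u v"
    using uv(2)
  proof
    assume "ancestor r p u v" then show ?thesis using \<open>u \<noteq> v\<close> uv(1) by (intro exI[of _ v] exI[of _ u]) simp
  next
    assume "ancestor r p v u"
    moreover have "ends e = {v,u}" using uv(1) by (simp add: insert_commute)
    ultimately show ?thesis using \<open>u \<noteq> v\<close> by (intro exI[of _ u] exI[of _ v]) simp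
  qed
  then show ?thesis unfolding fe_def by (rule someI_ex)
qed

lemma fe_Wn:
  assumes e: "e \<in> E" shows "fe e \<in> Wn"
proof -
  obtain u where u: "u \<noteq> fe e" "ends e = {u, fe e}" "ancestor r p u (fe e)" using fe_props[OF e] by blast
  have vV: "fe e \<in> V" using endsV[OF e] u(2) by blast
  obtain j where j: "j \<le> h (fe e)" "u = (p ^^ j) (fe e)" using anc_iter[OF u(3)] by blast
  have "j \<noteq> 0" using u(1) j(2) by (metis funpow_0)
  moreover have "(u, fe e) \<in> R" using edge_top(2)[OF e u(2,3)] .
  then have "((p ^^ j) (fe e), fe e) \<in> R" using j(2) by simp
  then have "j \<le> topk (fe e)" using topk_max[OF j(1)] by blast
  ultimately have "topk (fe e) > 0" by simp
  then show ?thesis using vV unfolding Wn_def by simp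
qed

lemma anc'_W: "ancestor r p' u v \<Longrightarrow> v \<in> W' \<Longrightarrow> u \<in> W'"
  unfolding ancestor_def using rt_in[OF rt'] by blast

lemma rank_bound:
  assumes X: "X \<subseteq> E" and F': "F' \<subseteq> X" "acyclic_edges ends F'"
  shows "card F' \<le> subtree_edges r p' (fe ` X)"
proof -
  let ?S = "fe ` X"
  define A' where "A' = {u. \<exists>v\<in>?S. ancestor r p' u v}"
  define A where "A = (A' - {r}) \<union> top ` ?S"
  have SWn: "?S \<subseteq> Wn" using fe_Wn X by blast
  have finX: "finite X" using finite_subset[OF X finE] .
  have A'W: "A' \<subseteq> W'" unfolding A'_def using anc'_W SWn unfolding W'_def by blast
  have finA': "finite A'" using finite_subset[OF A'W finite_subset[OF W'_sub finV]] .
  have finA: "finite A" unfolding A_def using finA' finX by simp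
  have finF': "finite F'" using finite_subset[OF F'(1) finX] .
  have SA: "?S \<subseteq> A' - {r}"
  proof
    fix v assume "v \<in> ?S"
    then show "v \<in> A' - {r}" unfolding A'_def using ancestor_refl[of r p' v] SWn r_notin by blast
  qed
  have ends_in: "\<forall>e\<in>F'. \<exists>u v. u \<noteq> v \<and> ends e = {u,v} \<and> u \<in> A \<and> v \<in> A"
  proof
    fix e assume eF: "e \<in> F'"
    then have eE: "e \<in> E" using F'(1) X by blast
    obtain u where u: "u \<noteq> fe e" "ends e = {u, fe e}" "ancestor r p u (fe e)" using fe_props[OF eE] by blast
    have feS: "fe e \<in> ?S" using eF F'(1) by blast
    have vA: "fe e \<in> A" using SA feS unfolding A_def by blast
    have vW: "fe e \<in> Wn" using fe_Wn[OF eE] .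
    obtain j where j: "j \<le> h (fe e)" "u = (p ^^ j) (fe e)" using anc_iter[OF u(3)] by blast
    have uR: "(u, fe e) \<in> R" using edge_top(2)[OF eE u(2,3)] .
    have uA: "u \<in> A"
    proof (cases "topk u = 0")
      case True
      then have "top u = u" unfolding top_def by simp
      moreover have "top u = top (fe e)" using top_shift[OF WnV[OF vW] j(1)] uR j(2) by simp
      ultimately show ?thesis using feS unfolding A_def by (metis UnI2 image_eqI)
    next
      case False
      then have "ancestor r p' u (fe e)" using anc'_lemma[OF vW j(1)] uR j(2) by simp
      moreover have "u \<noteq> r" using False topk_r by auto
      ultimately show ?thesis using feS unfolding A_def A'_def by blast
    qed
    show "\<exists>u v. u \<noteq> v \<and> ends e = {u,v} \<and> u \<in> A \<and> v \<in> A" using u uA vA by blast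
  qed
  have gc: "\<forall>(x,y)\<in>adj ends F'. top x = top y"
  proof (clarify)
    fix x y assume "(x,y) \<in> adj ends F'"
    then have "(x,y) \<in> adj ends E" using adj_mono[of F' E ends] F'(1) X by blast
    then show "top x = top y" by (rule adj_top)
  qed
  have fb: "card F' + card (top ` A) \<le> card A"
    by (rule forest_bound[OF finF' F'(2) finA ends_in gc])
  have "card A \<le> card (A' - {r}) + card (top ` ?S)" unfolding A_def by (rule card_Un_le)
  moreover have "card (top ` ?S) \<le> card (top ` A)"
    using SA finA unfolding A_def by (intro card_mono) auto
  ultimately have "card F' \<le> card (A' - {r})" using fb by linarith
  then show ?thesis unfolding subtree_edges_def A'_def .
qed

lemma graphic_rank_bound:
  assumes X: "X \<subseteq> E"
  shows "graphic_rank ends X \<le> subtree_edges r p' (fe ` X)"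
proof -
  have finX: "finite X" using finite_subset[OF X finE] .
  have fin: "finite {F'. F' \<subseteq> X \<and> acyclic_edges ends F'}" using finX by simp
  have ne: "{} \<in> {F'. F' \<subseteq> X \<and> acyclic_edges ends F'}"
    unfolding acyclic_edges_def is_cycle_def by auto
  show ?thesis unfolding graphic_rank_def
    using fin ne rank_bound[OF X] by (subst Max_le_iff) auto
qed

lemma card_split: "card F + card Tops = card V"
proof -
  have TV: "top ` V = Tops"
  proof
    show "top ` V \<subseteq> Tops"
    proof
      fix y assume "y \<in> top ` V"
      then obtain x where x: "x \<in> V" "y = top x" by blast
      then show "y \<in> Tops" unfolding Tops_def using top_in[OF x(1)] topk_top[OF x(1)] by simp
    qed
    show "Tops \<subseteq> top ` V"
    proof
      fix t assume t: "t \<in> Tops"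
      then have "top t = t" unfolding Tops_def top_def by simp
      moreover have "t \<in> V" using t unfolding Tops_def by simp
      ultimately show "t \<in> top ` V" by (intro image_eqI[of _ _ t]) simp_all
    qed
  qed
  have finF: "finite F" using finite_subset[OF FE finE] .
  have endsF: "\<forall>e\<in>F. \<exists>u v. u \<noteq> v \<and> ends e = {u,v} \<and> u \<in> V \<and> v \<in> V"
  proof
    fix e assume "e \<in> F"
    then have eE: "e \<in> E" using FE by blast
    obtain u where u: "u \<noteq> fe e" "ends e = {u, fe e}" using fe_props[OF eE] by blast
    have "u \<in> V" "fe e \<in> V" using endsV[OF eE] u(2) by auto
    then show "\<exists>u v. u \<noteq> v \<and> ends e = {u,v} \<and> u \<in> V \<and> v \<in> V" using u
      by (intro exI[of _ u] exI[of _ "fe e"]) simp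
  qed
  have gc: "\<forall>(x,y)\<in>adj ends F. top x = top y"
  proof (clarify)
    fix x y assume "(x,y) \<in> adj ends F"
    then have "(x,y) \<in> adj ends E" using adj_mono[OF FE] by blast
    then show "top x = top y" by (rule adj_top)
  qed
  have up: "card F + card Tops \<le> card V"
    using forest_bound[OF finF Fac finV endsF gc] TV by simp
  have endsF': "\<forall>e\<in>F. \<exists>u v. ends e = {u,v} \<and> u \<in> V \<and> v \<in> V"
  proof
    fix e assume "e \<in> F"
    then obtain u v where "u \<noteq> v" "ends e = {u,v}" "u \<in> V" "v \<in> V" using endsF by auto
    then show "\<exists>u v. ends e = {u,v} \<and> u \<in> V \<and> v \<in> V" by auto
  qed
  have lo: "card V \<le> card F + card ((\<lambda>x. R `` {x}) ` V)"
    by (rule vertex_bound[OF finF finV endsF'])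
  have "(\<lambda>x. R `` {x}) ` V \<subseteq> (\<lambda>x. R `` {x}) ` Tops"
  proof
    fix a assume "a \<in> (\<lambda>x. R `` {x}) ` V"
    then obtain x where x: "x \<in> V" "a = R `` {x}" by blast
    have "R `` {top x} = R `` {x}" using top_R[of x] class_eq by metis
    moreover have "top x \<in> Tops" using TV x(1) by blast
    ultimately show "a \<in> (\<lambda>x. R `` {x}) ` Tops" using x(2) by (metis image_eqI)
  qed
  then have "card ((\<lambda>x. R `` {x}) ` V) \<le> card ((\<lambda>x. R `` {x}) ` Tops)"
    using finV unfolding Tops_def by (intro card_mono) auto
  also have "\<dots> \<le> card Tops" by (rule card_image_le) (use finV in \<open>simp add: Tops_def\<close>)
  finally show ?thesis using up lo by linarith
qed

lemma tree_size': "tree_size W' = graphic_rank ends E"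
proof -
  have VU: "V = Wn \<union> Tops" and dj: "Wn \<inter> Tops = {}" unfolding Wn_def Tops_def by auto
  have fWn: "finite Wn" using finV unfolding Wn_def by simp
  have fT: "finite Tops" using finV unfolding Tops_def by simp
  have "card V = card (Wn \<union> Tops)" by (rule arg_cong[OF VU])
  then have "card V = card Wn + card Tops" using card_Un_disjoint[OF fWn fT dj] by simp
  moreover have "card W' = Suc (card Wn)" unfolding W'_def using r_notin fWn by simp
  ultimately show ?thesis unfolding tree_size_def using card_split Frank by simp
qed

lemma decomp: "depth_decomposition E (graphic_rank ends) W' r p' fe"
  unfolding depth_decomposition_def
proof (intro conjI allI impI)
  show "rooted_tree W' r p'" by (rule rt')
  show "fe ` E \<subseteq> W'" using fe_Wn unfolding W'_def by blast
  show "graphic_rank ends E = tree_size W'" using tree_size' by simp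
  show "\<And>X. X \<subseteq> E \<Longrightarrow> graphic_rank ends X \<le> subtree_edges r p' (fe ` X)"
    by (rule graphic_rank_bound)
qed

lemma bd_le: "branch_depth E (graphic_rank ends) \<le> tree_depth_of V r p"
proof -
  have pW: "p' ` W' \<subseteq> W'" using p'_in by blast
  obtain W2 :: "nat set" and r2 p2 f2 where d: "depth_decomposition E (graphic_rank ends) W2 r2 p2 f2"
    "tree_depth_of W2 r2 p2 = tree_depth_of W' r p'"
    using transfer_nat[OF decomp pW] by blast
  have "branch_depth E (graphic_rank ends) \<le> tree_depth_of W2 r2 p2"
    unfolding branch_depth_def by (rule Least_le) (use d(1) in blast)
  then show ?thesis using d(2) depth_le by simp
qed

end



lemma path_tree:
  assumes fin: "finite V" and ne: "V \<noteq> {}"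
  shows "\<exists>r p. rooted_tree V r p \<and> (\<forall>u\<in>V. \<forall>v\<in>V. ancestor r p u v \<or> ancestor r p v u)"
proof -
  let ?n = "card V"
  obtain g where g: "bij_betw g {0..<?n} V" using ex_bij_betw_nat_finite[OF fin] by blast
  have npos: "?n > 0" using fin ne by (simp add: card_gt_0_iff)
  define ix where "ix = inv_into {0..<?n} g"
  have ixV: "ix x < ?n" "g (ix x) = x" if "x \<in> V" for x
    using that g unfolding ix_def bij_betw_def
    by (auto intro: inv_into_into[of x g "{0..<?n}", simplified] f_inv_into_f)
  have gix: "ix (g j) = j" if "j < ?n" for j
    using that g unfolding ix_def bij_betw_def by (simp add: inv_into_f_f)
  have ginj: "g i = g j \<longleftrightarrow> i = j" if "i < ?n" "j < ?n" for i j
    using that g unfolding bij_betw_def by (auto dest: inj_onD)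
  have gV: "g j \<in> V" if "j < ?n" for j using that g unfolding bij_betw_def by auto
  define r where "r = g 0"
  define p where "p = (\<lambda>x. g (ix x - 1))"
  have it: "(p ^^ k) x = g (ix x - k)" if "x \<in> V" for x k
  proof (induction k)
    case 0 then show ?case using ixV[OF that] by simp
  next
    case (Suc k)
    have "ix x - k < ?n" using ixV[OF that] by simp
    then show ?case using Suc by (simp add: p_def gix)
  qed
  have rt: "rooted_tree V r p"
    unfolding rooted_tree_def
  proof (intro conjI ballI impI)
    show "finite V" by (rule fin)
    show "r \<in> V" unfolding r_def using gV npos by simp
    fix v assume v: "v \<in> V"
    show "p v \<in> V" unfolding p_def using gV ixV[OF v] by simp
    show "\<exists>k. (p ^^ k) v = r" using it[OF v, of "ix v"] unfolding r_def by auto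
  qed
  have ht: "height r p v = ix v" if v: "v \<in> V" for v
  proof (rule antisym)
    show "height r p v \<le> ix v" using it[OF v, of "ix v"] unfolding r_def by (intro height_le) simp
    have "g (ix v - height r p v) = g 0" using rt_reach[OF rt v] it[OF v] unfolding r_def by simp
    then have "ix v - height r p v = 0" using ginj ixV[OF v] npos by (metis le_less_trans diff_le_self)
    then show "ix v \<le> height r p v" by simp
  qed
  have anc: "ancestor r p u v" if "u \<in> V" "v \<in> V" "ix u \<le> ix v" for u v
    unfolding ancestor_def
  proof (intro exI[of _ "ix v - ix u"] conjI)
    show "ix v - ix u \<le> height r p v" using ht[OF that(2)] by simp
    show "(p ^^ (ix v - ix u)) v = u" using it[OF that(2)] that ixV by simp
  qed
  have "\<forall>u\<in>V. \<forall>v\<in>V. ancestor r p u v \<or> ancestor r p v u"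
    using anc by (meson nat_le_linear)
  then show ?thesis using rt by blast
qed

theorem proposition3p6:
  fixes V :: "'a set" and E :: "'e set" and ends :: "'e \<Rightarrow> 'a set"
  assumes "finite_graph V E ends"
  shows "branch_depth E (graphic_rank ends) \<le> treedepth V E ends"
proof (cases "V = {}")
  case True
  have E0: "E = {}"
  proof (rule ccontr)
    assume "E \<noteq> {}"
    then obtain e where "e \<in> E" by blast
    then have "ends e \<subseteq> V" "card (ends e) = 2" using assms unfolding finite_graph_def by auto
    then show False using True by simp
  qed
  have rk0: "graphic_rank ends {} = 0"
  proof -
    have "{F. F \<subseteq> {} \<and> acyclic_edges ends F} = {{}}"
      unfolding acyclic_edges_def is_cycle_def by auto
    then show ?thesis unfolding graphic_rank_def by simp
  qed
  have rt0: "rooted_tree {0::nat} 0 id" unfolding rooted_tree_def by (auto intro: exI[of _ 0])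
  have dd: "depth_decomposition E (graphic_rank ends) {0::nat} 0 id (\<lambda>_. 0)"
    unfolding depth_decomposition_def E0 using rt0 rk0 by (auto simp: tree_size_def)
  have "tree_depth_of {0::nat} 0 id = 0" unfolding tree_depth_of_def by (simp add: height_root)
  then have "branch_depth E (graphic_rank ends) \<le> 0"
    unfolding branch_depth_def using dd by (intro Least_le) blast
  then show ?thesis by simp
next
  case False
  have finV: "finite V" and finE: "finite E" using assms unfolding finite_graph_def by auto
  obtain r0 p0 where rt0: "rooted_tree V r0 p0"
    and tot: "\<forall>u\<in>V. \<forall>v\<in>V. ancestor r0 p0 u v \<or> ancestor r0 p0 v u"
    using path_tree[OF finV False] by blast
  let ?P = "\<lambda>d. \<exists>r p. rooted_tree V r p \<and>
       (\<forall>e\<in>E. \<exists>u v. ends e = {u, v} \<and> (ancestor r p u v \<or> ancestor r p v u)) \<and>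
       tree_depth_of V r p = d"
  have ex: "?P (tree_depth_of V r0 p0)"
  proof (rule exI[of _ r0], rule exI[of _ p0], intro conjI ballI)
    show "rooted_tree V r0 p0" by (rule rt0)
    show "tree_depth_of V r0 p0 = tree_depth_of V r0 p0" by (rule refl)
    fix e assume e: "e \<in> E"
    have "ends e \<subseteq> V" "card (ends e) = 2" using assms e unfolding finite_graph_def by auto
    then obtain u v where uv: "ends e = {u,v}" "u \<in> V" "v \<in> V" by (auto simp: card_2_iff)
    show "\<exists>u v. ends e = {u, v} \<and> (ancestor r0 p0 u v \<or> ancestor r0 p0 v u)"
      using uv tot by blast
  qed
  have "?P (treedepth V E ends)" unfolding treedepth_def by (rule LeastI[of ?P, OF ex])
  then obtain r p where rt: "rooted_tree V r p"
    and cl: "\<forall>e\<in>E. \<exists>u v. ends e = {u, v} \<and> (ancestor r p u v \<or> ancestor r p v u)"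
    and td: "tree_depth_of V r p = treedepth V E ends" by blast
  let ?C = "{F. F \<subseteq> E \<and> acyclic_edges ends F}"
  have finC: "finite ?C" using finE by simp
  have neC: "{} \<in> ?C" unfolding acyclic_edges_def is_cycle_def by auto
  have "graphic_rank ends E \<in> card ` ?C" unfolding graphic_rank_def
    using finC neC by (intro Max_in) auto
  then obtain F where F: "F \<subseteq> E" "acyclic_edges ends F" "card F = graphic_rank ends E" by auto
  have maxC: "card F' \<le> graphic_rank ends E" if "F' \<in> ?C" for F'
    unfolding graphic_rank_def using finC that by (intro Max_ge) auto
  have Fmax: "\<forall>e\<in>E. \<forall>u v. ends e = {u,v} \<longrightarrow> (u,v) \<in> conn ends F"
  proof (intro ballI allI impI)
    fix e u v assume e: "e \<in> E" and uv: "ends e = {u,v}"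
    show "(u,v) \<in> conn ends F"
    proof (cases "e \<in> F")
      case True then show ?thesis using uv by (intro adj_conn adjI)
    next
      case False
      have finF: "finite F" using finite_subset[OF F(1) finE] .
      have "\<not> acyclic_edges ends (insert e F)"
      proof
        assume "acyclic_edges ends (insert e F)"
        then have "insert e F \<in> ?C" using e F(1) by simp
        then have "card (insert e F) \<le> graphic_rank ends E" by (rule maxC)
        then show False using F(3) False finF by simp
      qed
      then obtain vs es where cyc: "is_cycle ends vs es" "set es \<subseteq> insert e F"
        unfolding acyclic_edges_def by blast
      have "e \<in> set es"
      proof (rule ccontr)
        assume "e \<notin> set es"
        then have "set es \<subseteq> F" using cyc(2) by blast
        then show False using F(2) cyc(1) unfolding acyclic_edges_def by blast
      qed
      then obtain i where i: "i < length es" "es ! i = e" by (metis in_set_conv_nth)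
      have c: "(vs ! ((i + 1) mod length es), vs ! i) \<in> conn ends F"
        by (rule cycle_conn[OF cyc i])
      have "ends e = {vs ! i, vs ! ((i + 1) mod length es)}"
        using cyc(1) i unfolding is_cycle_def by blast
      then have "{u,v} = {vs ! i, vs ! ((i + 1) mod length es)}" using uv by simp
      then have "(u = vs ! i \<and> v = vs ! ((i + 1) mod length es)) \<or>
                 (u = vs ! ((i + 1) mod length es) \<and> v = vs ! i)" by (auto simp: doubleton_eq_iff)
      then show ?thesis using c conn_sym by metis
    qed
  qed
  interpret etree V E ends r p F
    by (unfold_locales) (use assms rt cl F Fmax in auto)
  show ?thesis using bd_le td by simp
qed


end
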